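(* Let $\gamma$ be a generator of $\mathbb{F}_q^*$, let $f_1,\dots,f_s\in\mathbb{F}_q[x]$ be polynomials of degree at most $d$, and let $M$ be the $s\times s$ matrix over $\mathbb{F}_q(x)$ with $(j,i)$ entry $f_i(\gamma^j x)$ for $j=0,\dots,s-1$, $i=1,\dots,s$. Then: (1) $\det(M)\ne0$ iff $f_1,\dots,f_s$ are linearly independent over the subfield $\mathbb{F}_q(x^{q-1})$ of $\mathbb{F}_q(x)$; (2) if $q-1>d$, then $\det(M)\neq0$ iff $f_1,\dots,f_s$ are linearly independent over $\mathbb{F}_q$.
   Context: $\mathbb{F}_q(x^{q-1})$ denotes the subfield of $\mathbb{F}_q(x)$ consisting of rational functions of the form $u(x^{q-1})$ with $u\in\mathbb{F}_q(x)$. *)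

theory Defs
  imports "Jordan_Normal_Form.Determinant" "HOL-Computational_Algebra.Fraction_Field"
begin

text \<open>The subfield
  F_q(x^{q-1}) consists of all u(x^{q-1}) with u a rational function, i.e. all
  quotients a(x^{q-1}) / b(x^{q-1}) of polynomials.\<close>

definition subfield_xq1 :: "('a::{finite,field}) poly fract set" where
  "subfield_xq1 = {u. \<exists>a b. u = to_fract (pcompose a (monom 1 (card (UNIV :: 'a set) - 1))) /
                    to_fract (pcompose b (monom 1 (card (UNIV :: 'a set) - 1)))}"

definition lin_indep_over :: "'b::field set \<Rightarrow> nat \<Rightarrow> (nat \<Rightarrow> 'b) \<Rightarrow> bool" where
  "lin_indep_over K s g \<longleftrightarrow>
     (\<forall>c. (\<forall>i<s. c i \<in> K) \<longrightarrow> (\<Sum>i<s. c i * g i) = 0 \<longrightarrow> (\<forall>i<s. c i = 0))"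

definition lin_indep_Fq :: "nat \<Rightarrow> (nat \<Rightarrow> 'a::field poly) \<Rightarrow> bool" where
  "lin_indep_Fq s f \<longleftrightarrow>
     (\<forall>c::nat \<Rightarrow> 'a. (\<Sum>i<s. smult (c i) (f i)) = 0 \<longrightarrow> (\<forall>i<s. c i = 0))"

definition Mmat :: "'a::field \<Rightarrow> nat \<Rightarrow> (nat \<Rightarrow> 'a poly) \<Rightarrow> 'a poly fract mat" where
  "Mmat \<gamma> s f = mat s s (\<lambda>(j, i). to_fract (pcompose (f i) [:0, \<gamma> ^ j:]))"

end

theory Submission
  imports Defs
begin



lemma card_ge2: "card (UNIV::'a::{finite,field} set) \<ge> 2"
proof -
  have "{0::'a, 1} \<subseteq> UNIV" by auto
  hence "card {0::'a,1} \<le> card (UNIV::'a set)" by (intro card_mono) auto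
  thus ?thesis by simp
qed

context
  fixes \<gamma> :: "'a::{finite,field}"
  assumes g0: "\<gamma> \<noteq> 0" and gen: "\<forall>y::'a. y \<noteq> 0 \<longrightarrow> (\<exists>n::nat. y = \<gamma> ^ n)"
begin

lemma gamma_pow_n: "\<gamma> ^ (card (UNIV::'a set) - 1) = 1"
proof -
  let ?U = "UNIV - {0::'a}"
  have cU: "card ?U = card (UNIV::'a set) - 1" by (simp add: card_Diff_singleton)
  have bij: "bij_betw (\<lambda>y. \<gamma> * y) ?U ?U"
  proof (rule bij_betw_imageI)
    show "inj_on (\<lambda>y. \<gamma> * y) ?U" using g0 by (auto simp: inj_on_def)
    show "(\<lambda>y. \<gamma> * y) ` ?U = ?U"
    proof
      show "(\<lambda>y. \<gamma> * y) ` ?U \<subseteq> ?U" using g0 by auto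
      show "?U \<subseteq> (\<lambda>y. \<gamma> * y) ` ?U"
      proof
        fix y assume "y \<in> ?U"
        hence "y = \<gamma> * (y / \<gamma>)" "y / \<gamma> \<in> ?U" using g0 by auto
        thus "y \<in> (\<lambda>y. \<gamma> * y) ` ?U" by blast
      qed
    qed
  qed
  have "prod (\<lambda>y. y) ?U = prod (\<lambda>y. \<gamma> * y) ?U"
    using prod.reindex_bij_betw[OF bij, of "\<lambda>y. y"] by simp
  also have "\<dots> = \<gamma> ^ card ?U * prod (\<lambda>y. y) ?U" by (simp add: prod.distrib)
  finally have "1 * prod (\<lambda>y. y) ?U = \<gamma> ^ card ?U * prod (\<lambda>y. y) ?U" by simp
  moreover have "prod (\<lambda>y. y) ?U \<noteq> 0" by simp
  ultimately have "\<gamma> ^ card ?U = 1" by (metis mult_right_cancel)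
  thus ?thesis using cU by simp
qed

lemma gamma_pow_mod: "\<gamma> ^ k = \<gamma> ^ (k mod (card (UNIV::'a set) - 1))"
proof -
  let ?n = "card (UNIV::'a set) - 1"
  have "\<gamma> ^ k = \<gamma> ^ (?n * (k div ?n) + k mod ?n)" by simp
  also have "\<dots> = (\<gamma> ^ ?n) ^ (k div ?n) * \<gamma> ^ (k mod ?n)" by (simp only: power_add power_mult)
  also have "\<dots> = \<gamma> ^ (k mod ?n)" using gamma_pow_n by simp
  finally show ?thesis .
qed

lemma gamma_pow_eq_1: assumes "\<gamma> ^ k = 1" shows "(card (UNIV::'a set) - 1) dvd k"
proof -
  let ?n = "card (UNIV::'a set) - 1"
  have n0: "?n > 0" using card_ge2[where 'a='a] by simp
  let ?U = "UNIV - {0::'a}"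
  have "(\<lambda>r. \<gamma> ^ r) ` {..<?n} = ?U"
  proof
    show "(\<lambda>r. \<gamma> ^ r) ` {..<?n} \<subseteq> ?U" using g0 by auto
    show "?U \<subseteq> (\<lambda>r. \<gamma> ^ r) ` {..<?n}"
    proof
      fix y assume "y \<in> ?U"
      then obtain m where "y = \<gamma> ^ m" using gen by auto
      hence "y = \<gamma> ^ (m mod ?n)" using gamma_pow_mod by simp
      moreover have "m mod ?n < ?n" using n0 by simp
      ultimately show "y \<in> (\<lambda>r. \<gamma> ^ r) ` {..<?n}" by blast
    qed
  qed
  hence "card ((\<lambda>r. \<gamma> ^ r) ` {..<?n}) = card {..<?n}" by (simp add: card_Diff_singleton)
  hence inj: "inj_on (\<lambda>r. \<gamma> ^ r) {..<?n}" by (rule eq_card_imp_inj_on[rotated]) simp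
  have "\<gamma> ^ (k mod ?n) = \<gamma> ^ 0" using assms gamma_pow_mod by simp
  hence "k mod ?n = 0" using inj n0 by (auto simp: inj_on_def)
  thus ?thesis by auto
qed

end



definition sh :: "'a::field \<Rightarrow> nat \<Rightarrow> 'a poly \<Rightarrow> 'a poly" where
  "sh g j p = p \<circ>\<^sub>p [:0, g ^ j:]"

lemma coeff_sh: "coeff (sh g j p) k = (g ^ j) ^ k * coeff p k"
  by (simp add: sh_def coeff_pcompose_linear)

lemma sh_add[simp]: "sh g j (p + q) = sh g j p + sh g j q"
  by (simp add: sh_def pcompose_add)
lemma sh_diff[simp]: "sh g j (p - q) = sh g j p - sh g j q"
  by (simp add: sh_def pcompose_diff)
lemma sh_mult[simp]: "sh g j (p * q) = sh g j p * sh g j q"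
  by (simp add: sh_def pcompose_mult)
lemma sh_smult[simp]: "sh g j (smult c q) = smult c (sh g j q)"
  by (simp add: sh_def pcompose_smult)
lemma sh_sum: "sh g j (sum f A) = sum (\<lambda>i. sh g j (f i)) A"
  by (simp add: sh_def pcompose_sum)
lemma sh_prod: "sh g j (prod f A) = prod (\<lambda>i. sh g j (f i)) A"
  by (simp add: sh_def pcompose_prod)
lemma sh_zero[simp]: "sh g j 0 = 0" by (simp add: sh_def)
lemma sh_const[simp]: "sh g j [:c:] = [:c:]" by (simp add: sh_def)
lemma sh_0[simp]: "sh g 0 p = p" by (simp add: sh_def)
lemma sh_sh: "sh g i (sh g j p) = sh g (i + j) p"
proof -
  have "[:0, g ^ j:] \<circ>\<^sub>p [:0, g ^ i:] = [:0, g ^ (i + j):]"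
    by (simp add: pcompose_pCons power_add mult.commute)
  thus ?thesis by (simp add: sh_def pcompose_assoc[symmetric])
qed
lemma sh_eq_0_iff[simp]: assumes "g \<noteq> 0" shows "sh g j p = 0 \<longleftrightarrow> p = 0"
proof
  assume "sh g j p = 0"
  hence "\<forall>k. (g ^ j) ^ k * coeff p k = 0" by (metis coeff_sh coeff_0)
  thus "p = 0" using assms by (auto intro: poly_eqI)
qed simp

lemma coeff_pcompose_monom': fixes a :: "'a::comm_ring_1 poly" assumes "n > 0"
  shows "coeff (a \<circ>\<^sub>p monom 1 n) k = (if n dvd k then coeff a (k div n) else 0)"
  using assms
proof (induction a arbitrary: k)
  case 0 thus ?case by simp
next
  case (pCons c a)
  have "coeff (pCons c a \<circ>\<^sub>p monom 1 n) k = coeff [:c:] k + coeff (monom 1 n * (a \<circ>\<^sub>p monom 1 n)) k"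
    by (simp add: pcompose_pCons)
  also have "\<dots> = (if k = 0 then c else 0) + (if k < n then 0 else coeff (a \<circ>\<^sub>p monom 1 n) (k - n))"
    using pCons.prems by (auto simp add: coeff_monom_mult coeff_pCons split: nat.split)
  also have "\<dots> = (if n dvd k then coeff (pCons c a) (k div n) else 0)"
  proof (cases "k < n")
    case True thus ?thesis using pCons.prems by (auto simp: coeff_pCons dvd_imp_le)
  next
    case False
    hence k: "k = (k - n) + n" "k \<noteq> 0" using pCons.prems by auto
    have "n dvd k \<longleftrightarrow> n dvd (k - n)" using k by (metis dvd_add_triv_right_iff)
    moreover have "n dvd (k - n) \<Longrightarrow> k div n = Suc ((k - n) div n)"
      using pCons.prems k by (metis add.commute div_add_self2 less_not_refl plus_1_eq_Suc)
    ultimately show ?thesis using False pCons.IH[OF pCons.prems, of "k - n"] k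
      by (auto simp: coeff_pCons)
  qed
  finally show ?case .
qed

context
  fixes \<gamma> :: "'a::{finite,field}"
  assumes g0: "\<gamma> \<noteq> 0" and gen: "\<forall>y::'a. y \<noteq> 0 \<longrightarrow> (\<exists>n::nat. y = \<gamma> ^ n)"
begin


lemma nn_pos: "(card (UNIV::'a set) - 1) > 0" using card_ge2[where 'a='a] by simp

lemma sh_period: "sh \<gamma> ((card (UNIV::'a set) - 1) * m) p = p"
  using gamma_pow_n[OF g0 gen] by (simp add: sh_def power_mult)

lemma sh_mod: "sh \<gamma> j p = sh \<gamma> (j mod (card (UNIV::'a set) - 1)) p"
  using gamma_pow_mod[OF g0 gen, of j] by (simp add: sh_def)

lemma sh_comp_monom: "sh \<gamma> j (a \<circ>\<^sub>p monom 1 (card (UNIV::'a set) - 1)) = a \<circ>\<^sub>p monom 1 (card (UNIV::'a set) - 1)"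
proof -
  have "monom (1::'a) (card (UNIV::'a set) - 1) \<circ>\<^sub>p [:0, \<gamma> ^ j:] = monom 1 (card (UNIV::'a set) - 1)"
  proof (rule poly_eqI)
    fix k
    have "(\<gamma> ^ j) ^ (card (UNIV::'a set) - 1) = 1" using gamma_pow_n[OF g0 gen]
      by (metis power_mult power_mult_distrib mult.commute power_one)
    thus "coeff (monom (1::'a) (card (UNIV::'a set) - 1) \<circ>\<^sub>p [:0, \<gamma> ^ j:]) k = coeff (monom 1 (card (UNIV::'a set) - 1)) k"
      by (auto simp add: coeff_pcompose_linear)
  qed
  thus ?thesis by (simp add: sh_def pcompose_assoc[symmetric])
qed

lemma fixed_coeff: assumes "sh \<gamma> 1 p = p" "coeff p k \<noteq> 0" shows "(card (UNIV::'a set) - 1) dvd k"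
proof -
  have "\<gamma> ^ k * coeff p k = coeff p k" using assms(1) by (metis coeff_sh power_one_right)
  hence "\<gamma> ^ k = 1" using assms(2) by simp
  thus ?thesis using gamma_pow_eq_1[OF g0 gen] by simp
qed

lemma fixed_comp: assumes "sh \<gamma> 1 p = p" shows "\<exists>a. p = a \<circ>\<^sub>p monom 1 (card (UNIV::'a set) - 1)"
proof -
  define a where "a = (\<Sum>i\<le>degree p. monom (coeff p ((card (UNIV::'a set) - 1) * i)) i)"
  have ca: "coeff a i = coeff p ((card (UNIV::'a set) - 1) * i)" for i
  proof (cases "i \<le> degree p")
    case True thus ?thesis by (simp add: a_def coeff_sum_monom)
  next
    case False
    hence "(card (UNIV::'a set) - 1) * i > degree p" using nn_pos
      by (metis dual_order.strict_trans1 less_one linorder_not_le mult_le_mono1 mult_1 nat_mult_1 not_less_eq_eq)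
    thus ?thesis using False by (simp add: a_def coeff_sum coeff_eq_0)
  qed
  have "p = a \<circ>\<^sub>p monom 1 (card (UNIV::'a set) - 1)"
  proof (rule poly_eqI)
    fix k
    show "coeff p k = coeff (a \<circ>\<^sub>p monom 1 (card (UNIV::'a set) - 1)) k"
      using fixed_coeff[OF assms, of k] nn_pos by (auto simp: coeff_pcompose_monom' ca)
  qed
  thus ?thesis ..
qed

end



context
  fixes \<gamma> :: "'a::{finite,field}"
  assumes g0: "\<gamma> \<noteq> 0" and gen: "\<forall>y::'a. y \<noteq> 0 \<longrightarrow> (\<exists>n::nat. y = \<gamma> ^ n)"
begin

lemma ratio_in_subfield:
  assumes wk: "wk \<noteq> 0" and rel: "wk * sh \<gamma> 1 wi = sh \<gamma> 1 wk * wi"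
  shows "to_fract wi / to_fract wk \<in> subfield_xq1"
proof -
  let ?N = "card (UNIV::'a set) - 1"
  obtain m where N: "?N = Suc m" using nn_pos[OF g0 gen] gr0_implies_Suc by blast
  define R where "R = (\<Prod>j<m. sh \<gamma> (Suc j) wk)"
  define Nm where "Nm = (\<Prod>j<?N. sh \<gamma> j wk)"
  have NmR: "Nm = wk * R"
    unfolding Nm_def R_def N by (simp only: prod.lessThan_Suc_shift sh_0)
  have "sh \<gamma> 1 Nm * wk = (\<Prod>j<?N. sh \<gamma> (Suc j) wk) * sh \<gamma> 0 wk"
    by (simp add: Nm_def sh_prod sh_sh)
  also have "\<dots> = (\<Prod>j<Suc ?N. sh \<gamma> j wk)"
    by (subst prod.lessThan_Suc_shift) (simp only: sh_0 mult.commute)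
  also have "\<dots> = Nm * sh \<gamma> (?N * 1) wk"
    by (simp add: Nm_def)
  also have "\<dots> = Nm * wk" by (simp only: sh_period[OF g0 gen])
  finally have fixNm: "sh \<gamma> 1 Nm = Nm" using wk by simp
  define P1 where "P1 = wi * R"
  have "wk * sh \<gamma> 1 P1 = (wk * sh \<gamma> 1 wi) * sh \<gamma> 1 R" by (simp add: P1_def)
  also have "\<dots> = (sh \<gamma> 1 wk * wi) * sh \<gamma> 1 R" by (simp only: rel)
  also have "\<dots> = wi * sh \<gamma> 1 (wk * R)" by (simp only: sh_mult ac_simps)
  also have "\<dots> = wi * sh \<gamma> 1 Nm" by (simp only: NmR)
  also have "\<dots> = wk * P1" unfolding fixNm by (simp add: NmR P1_def ac_simps)
  finally have fixP1: "sh \<gamma> 1 P1 = P1" using wk by simp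
  obtain a where a: "P1 = a \<circ>\<^sub>p monom 1 ?N" using fixed_comp[OF g0 gen fixP1] by blast
  obtain b where b: "Nm = b \<circ>\<^sub>p monom 1 ?N" using fixed_comp[OF g0 gen fixNm] by blast
  have Nm0: "Nm \<noteq> 0" unfolding Nm_def using wk g0 by simp
  have "wi * Nm = wk * P1" by (simp add: NmR P1_def)
  hence "to_fract wi * to_fract Nm = to_fract wk * to_fract P1" by (metis to_fract_mult)
  hence "to_fract wi / to_fract wk = to_fract P1 / to_fract Nm"
    using wk Nm0 by (simp add: frac_eq_eq mult.commute)
  thus ?thesis unfolding subfield_xq1_def a b by blast
qed

end



lemma to_fract_sum: "to_fract (sum f A) = sum (\<lambda>i. to_fract (f i)) A"
  by (induct A rule: infinite_finite_induct) auto

context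
  fixes \<gamma> :: "'a::{finite,field}"
  assumes g0: "\<gamma> \<noteq> 0" and gen: "\<forall>y::'a. y \<noteq> 0 \<longrightarrow> (\<exists>n::nat. y = \<gamma> ^ n)"
begin

lemma claim:
  fixes f :: "nat \<Rightarrow> 'a poly"
  shows "\<forall>a m v. card {i. i < s \<and> v i \<noteq> 0} \<le> t \<longrightarrow> t \<le> m \<longrightarrow> (\<exists>i<s. v i \<noteq> 0) \<longrightarrow>
     (\<forall>j. a \<le> j \<and> j < a + m \<longrightarrow> (\<Sum>i<s. v i * sh \<gamma> j (f i)) = 0) \<longrightarrow>
     (\<exists>w k b. k < s \<and> w k \<noteq> 0 \<and> (\<forall>i<s. w k * sh \<gamma> 1 (w i) = sh \<gamma> 1 (w k) * w i)
        \<and> (\<Sum>i<s. w i * sh \<gamma> b (f i)) = 0)"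
proof (induction t)
  case 0
  show ?case
  proof (intro allI impI)
    fix a m v
    assume c: "card {i. i < s \<and> v i \<noteq> (0::'a poly)} \<le> 0" and ex: "\<exists>i<s. v i \<noteq> 0"
    have "finite {i. i < s \<and> v i \<noteq> 0}" by simp
    with c have "{i. i < s \<and> v i \<noteq> 0} = {}" by simp
    with ex have False by auto
    thus "\<exists>w k b. k < s \<and> w k \<noteq> 0 \<and> (\<forall>i<s. w k * sh \<gamma> 1 (w i) = sh \<gamma> 1 (w k) * w i)
        \<and> (\<Sum>i<s. w i * sh \<gamma> b (f i)) = 0" ..
  qed
next
  case (Suc t)
  show ?case
  proof (intro allI impI)
    fix a m v
    assume c: "card {i. i < s \<and> v i \<noteq> (0::'a poly)} \<le> Suc t" and tm: "Suc t \<le> m"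
      and ex: "\<exists>i<s. v i \<noteq> 0"
      and eq: "\<forall>j. a \<le> j \<and> j < a + m \<longrightarrow> (\<Sum>i<s. v i * sh \<gamma> j (f i)) = 0"
    obtain k where k: "k < s" "v k \<noteq> 0" using ex by blast
    define u where "u i = v k * sh \<gamma> 1 (v i) - sh \<gamma> 1 (v k) * v i" for i
    show "\<exists>w k b. k < s \<and> w k \<noteq> 0 \<and> (\<forall>i<s. w k * sh \<gamma> 1 (w i) = sh \<gamma> 1 (w k) * w i)
        \<and> (\<Sum>i<s. w i * sh \<gamma> b (f i)) = 0"
    proof (cases "\<exists>i<s. u i \<noteq> 0")
      case False
      hence "\<forall>i<s. v k * sh \<gamma> 1 (v i) = sh \<gamma> 1 (v k) * v i" by (auto simp: u_def)
      moreover have "(\<Sum>i<s. v i * sh \<gamma> a (f i)) = 0" using eq tm by auto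
      ultimately show ?thesis using k by blast
    next
      case True
      have sub: "{i. i < s \<and> u i \<noteq> 0} \<subseteq> {i. i < s \<and> v i \<noteq> 0} - {k}"
        by (auto simp: u_def)
      have "card {i. i < s \<and> u i \<noteq> 0} \<le> card ({i. i < s \<and> v i \<noteq> 0} - {k})"
        by (rule card_mono[OF _ sub]) simp
      also have "\<dots> = card {i. i < s \<and> v i \<noteq> 0} - 1"
        using k by (subst card_Diff_singleton) auto
      finally have cu: "card {i. i < s \<and> u i \<noteq> 0} \<le> t" using c by simp
      have equ: "\<forall>j. a + 1 \<le> j \<and> j < (a + 1) + (m - 1) \<longrightarrow> (\<Sum>i<s. u i * sh \<gamma> j (f i)) = 0"
      proof (intro allI impI)
        fix j assume j: "a + 1 \<le> j \<and> j < (a + 1) + (m - 1)"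
        define j' where "j' = j - 1"
        have j': "j = Suc j'" "a \<le> j'" "j' < a + m" using tm j unfolding j'_def by auto
        have e1: "(\<Sum>i<s. v i * sh \<gamma> j' (f i)) = 0" using eq j' by auto
        have e2: "(\<Sum>i<s. v i * sh \<gamma> j (f i)) = 0" using eq j tm by auto
        have "(\<Sum>i<s. sh \<gamma> 1 (v i) * sh \<gamma> j (f i)) = sh \<gamma> 1 (\<Sum>i<s. v i * sh \<gamma> j' (f i))"
          by (simp add: sh_sum sh_sh j'(1))
        also have "\<dots> = 0" using e1 by simp
        finally have e3: "(\<Sum>i<s. sh \<gamma> 1 (v i) * sh \<gamma> j (f i)) = 0" .
        have "(\<Sum>i<s. u i * sh \<gamma> j (f i)) =
           v k * (\<Sum>i<s. sh \<gamma> 1 (v i) * sh \<gamma> j (f i)) - sh \<gamma> 1 (v k) * (\<Sum>i<s. v i * sh \<gamma> j (f i))"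
          by (simp add: u_def sum_distrib_left sum_subtractf algebra_simps)
        thus "(\<Sum>i<s. u i * sh \<gamma> j (f i)) = 0" using e2 e3 by simp
      qed
      have tm': "t \<le> m - 1" using tm by simp
      show ?thesis using Suc.IH[rule_format, OF cu tm' True] equ by blast
    qed
  qed
qed

end



context
  fixes \<gamma> :: "'a::{finite,field}"
  assumes g0: "\<gamma> \<noteq> 0" and gen: "\<forall>y::'a. y \<noteq> 0 \<longrightarrow> (\<exists>n::nat. y = \<gamma> ^ n)"
begin

lemma rel_all:
  assumes wk: "wk \<noteq> 0" and rel: "wk * sh \<gamma> 1 wi = sh \<gamma> 1 wk * wi"
  shows "wk * sh \<gamma> j wi = sh \<gamma> j wk * wi"
proof (induction j)
  case 0 thus ?case by simp
next
  case (Suc j)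
  have "sh \<gamma> 1 (wk * sh \<gamma> j wi) = sh \<gamma> 1 (sh \<gamma> j wk * wi)" using Suc by simp
  hence h: "sh \<gamma> 1 wk * sh \<gamma> (Suc j) wi = sh \<gamma> (Suc j) wk * sh \<gamma> 1 wi" by (simp add: sh_sh)
  have "sh \<gamma> 1 wk * (wk * sh \<gamma> (Suc j) wi) = wk * (sh \<gamma> 1 wk * sh \<gamma> (Suc j) wi)" by (simp add: ac_simps)
  also have "\<dots> = sh \<gamma> (Suc j) wk * (wk * sh \<gamma> 1 wi)" by (simp only: h ac_simps)
  also have "\<dots> = sh \<gamma> 1 wk * (sh \<gamma> (Suc j) wk * wi)" by (simp only: rel ac_simps)
  finally show ?case using wk g0 by simp
qed

lemma dep_from_det0:
  fixes f :: "nat \<Rightarrow> 'a poly"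
  assumes "det (mat s s (\<lambda>(j,i). sh \<gamma> j (f i))) = 0"
  shows "\<not> lin_indep_over subfield_xq1 s (\<lambda>i. to_fract (f i))"
proof -
  let ?P = "mat s s (\<lambda>(j,i). sh \<gamma> j (f i))"
  have "?P \<in> carrier_mat s s" by simp
  from assms det_0_iff_vec_prod_zero[OF this] obtain v where
    v: "v \<in> carrier_vec s" "v \<noteq> 0\<^sub>v s" "?P *\<^sub>v v = 0\<^sub>v s" by auto
  define vf where "vf i = (if i < s then v $ i else 0)" for i
  have ex: "\<exists>i<s. vf i \<noteq> 0"
  proof (rule ccontr)
    assume "\<not> ?thesis"
    hence "v = 0\<^sub>v s" using v(1) by (intro eq_vecI) (auto simp: vf_def)
    thus False using v(2) by simp
  qed
  have eqs: "\<forall>j. 0 \<le> j \<and> j < 0 + s \<longrightarrow> (\<Sum>i<s. vf i * sh \<gamma> j (f i)) = 0"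
  proof (intro allI impI)
    fix j assume j: "0 \<le> j \<and> j < 0 + s"
    have "(?P *\<^sub>v v) $ j = 0" using v(3) j by simp
    hence "(\<Sum>i = 0..<s. sh \<gamma> j (f i) * v $ i) = 0" using j v(1)
      by (simp add: scalar_prod_def)
    thus "(\<Sum>i<s. vf i * sh \<gamma> j (f i)) = 0"
      by (simp add: vf_def atLeast0LessThan mult.commute)
  qed
  have cardle: "card {i. i < s \<and> vf i \<noteq> 0} \<le> s"
    by (rule order.trans[OF card_mono[of "{..<s}"]]) auto
  have "\<exists>w k b. k < s \<and> w k \<noteq> 0 \<and> (\<forall>i<s. w k * sh \<gamma> 1 (w i) = sh \<gamma> 1 (w k) * w i)
        \<and> (\<Sum>i<s. w i * sh \<gamma> b (f i)) = 0"
    using claim[OF g0 gen, of s s f] cardle ex eqs by blast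
  then obtain w k b where wkb: "k < s" "w k \<noteq> 0" "\<forall>i<s. w k * sh \<gamma> 1 (w i) = sh \<gamma> 1 (w k) * w i"
      "(\<Sum>i<s. w i * sh \<gamma> b (f i)) = 0" by blast
  let ?N = "card (UNIV::'a set) - 1"
  define c where "c = ?N * b - b"
  have "1 \<le> ?N" using nn_pos[OF g0 gen] by linarith
  hence "1 * b \<le> ?N * b" by (rule mult_le_mono1)
  hence "b \<le> ?N * b" by simp
  hence cb: "c + b = ?N * b" unfolding c_def by simp
  have "sh \<gamma> c (\<Sum>i<s. w i * sh \<gamma> b (f i)) = 0" using wkb(4) by simp
  hence "(\<Sum>i<s. sh \<gamma> c (w i) * f i) = 0"
    by (simp add: sh_sum sh_sh cb sh_period[OF g0 gen, simplified])
  hence "w k * (\<Sum>i<s. sh \<gamma> c (w i) * f i) = 0" by simp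
  hence "(\<Sum>i<s. (w k * sh \<gamma> c (w i)) * f i) = 0" by (simp add: sum_distrib_left ac_simps)
  moreover have "(\<Sum>i<s. (w k * sh \<gamma> c (w i)) * f i) = (\<Sum>i<s. sh \<gamma> c (w k) * (w i * f i))"
  proof (rule sum.cong)
    fix i assume "i \<in> {..<s}"
    hence "w k * sh \<gamma> c (w i) = sh \<gamma> c (w k) * w i" using rel_all[OF wkb(2)] wkb(3) by simp
    thus "(w k * sh \<gamma> c (w i)) * f i = sh \<gamma> c (w k) * (w i * f i)" by (simp only: mult.assoc)
  qed simp
  ultimately have "(\<Sum>i<s. sh \<gamma> c (w k) * (w i * f i)) = 0" by simp
  hence "sh \<gamma> c (w k) * (\<Sum>i<s. w i * f i) = 0" by (simp add: sum_distrib_left)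
  hence sum0: "(\<Sum>i<s. w i * f i) = 0" using g0 wkb(2) by simp
  define cc where "cc i = to_fract (w i) / to_fract (w k)" for i
  have "(\<Sum>i<s. cc i * to_fract (f i)) = (\<Sum>i<s. to_fract (w i * f i)) / to_fract (w k)"
    by (simp add: cc_def sum_divide_distrib)
  also have "(\<Sum>i<s. to_fract (w i * f i)) = to_fract (\<Sum>i<s. w i * f i)"
    by (rule to_fract_sum[symmetric])
  also have "\<dots> = 0" by (simp add: sum0)
  finally have s0: "(\<Sum>i<s. cc i * to_fract (f i)) = 0" by simp
  have inK: "\<forall>i<s. cc i \<in> subfield_xq1"
    using ratio_in_subfield[OF g0 gen wkb(2)] wkb(3) by (simp add: cc_def)
  have "cc k \<noteq> 0" using wkb(2) by (simp add: cc_def)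
  hence "\<not> (\<forall>i<s. cc i = 0)" using wkb(1) by blast
  thus ?thesis using s0 inK unfolding lin_indep_over_def by (intro notI) (drule spec[of _ cc], blast)
qed

lemma clear_dep:
  fixes f :: "nat \<Rightarrow> 'a poly"
  assumes "\<not> lin_indep_over subfield_xq1 s (\<lambda>i. to_fract (f i))"
  shows "\<exists>w. (\<forall>i<s. sh \<gamma> 1 (w i) = w i) \<and> (\<exists>i<s. w i \<noteq> 0) \<and> (\<Sum>i<s. w i * f i) = 0"
proof -
  let ?M = "monom (1::'a) (card (UNIV::'a set) - 1)"
  obtain c i0 where c: "\<forall>i<s. c i \<in> subfield_xq1" "(\<Sum>i<s. c i * to_fract (f i)) = 0"
    and i0: "i0 < s" "c i0 \<noteq> 0"
    using assms unfolding lin_indep_over_def by blast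
  have "\<forall>i. \<exists>p. i < s \<longrightarrow> c i = to_fract (fst p \<circ>\<^sub>p ?M) / to_fract (snd p \<circ>\<^sub>p ?M)"
  proof
    fix i
    show "\<exists>p. i < s \<longrightarrow> c i = to_fract (fst p \<circ>\<^sub>p ?M) / to_fract (snd p \<circ>\<^sub>p ?M)"
    proof (cases "i < s")
      case True
      then obtain a b where "c i = to_fract (a \<circ>\<^sub>p ?M) / to_fract (b \<circ>\<^sub>p ?M)"
        using c(1) unfolding subfield_xq1_def by blast
      thus ?thesis by (intro exI[of _ "(a, b)"]) simp
    qed simp
  qed
  from choice[OF this] obtain g where g: "\<forall>i<s. c i = to_fract (fst (g i) \<circ>\<^sub>p ?M) / to_fract (snd (g i) \<circ>\<^sub>p ?M)"
    ..
  define A where "A i = (if snd (g i) \<circ>\<^sub>p ?M = 0 then 0 else fst (g i) \<circ>\<^sub>p ?M)" for i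
  define B where "B i = (if snd (g i) \<circ>\<^sub>p ?M = 0 then 1 else snd (g i) \<circ>\<^sub>p ?M)" for i
  have cAB: "c i = to_fract (A i) / to_fract (B i)" if "i < s" for i
    using g that by (auto simp: A_def B_def)
  have B0: "B i \<noteq> 0" for i by (simp add: B_def)
  have sh1: "sh \<gamma> j 1 = 1" for j by (simp add: sh_def pcompose_1)
  have fA: "sh \<gamma> 1 (A i) = A i" for i by (simp add: A_def sh_comp_monom[OF g0 gen, simplified])
  have fB: "sh \<gamma> 1 (B i) = B i" for i by (simp add: B_def sh_comp_monom[OF g0 gen, simplified] sh1)
  define w where "w i = A i * (\<Prod>l\<in>{..<s} - {i}. B l)" for i
  define D where "D = (\<Prod>l<s. B l)"
  have D0: "D \<noteq> 0" using B0 by (simp add: D_def)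
  have tw: "to_fract (w i) = c i * to_fract D" if "i < s" for i
  proof -
    have "D = B i * (\<Prod>l\<in>{..<s} - {i}. B l)" unfolding D_def using that
      by (simp add: prod.remove)
    thus ?thesis using that B0 by (simp add: w_def cAB)
  qed
  have "to_fract (\<Sum>i<s. w i * f i) = (\<Sum>i<s. c i * to_fract D * to_fract (f i))"
    by (simp add: to_fract_sum tw)
  also have "\<dots> = to_fract D * (\<Sum>i<s. c i * to_fract (f i))"
    by (simp add: sum_distrib_left ac_simps)
  also have "\<dots> = 0" using c(2) by simp
  finally have "to_fract (\<Sum>i<s. w i * f i) = 0" .
  hence s0: "(\<Sum>i<s. w i * f i) = 0" by (simp only: to_fract_eq_0_iff)
  have "to_fract (w i0) \<noteq> 0" using tw[OF i0(1)] i0(2) D0 by simp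
  hence "w i0 \<noteq> 0" by auto
  moreover have "\<forall>i<s. sh \<gamma> 1 (w i) = w i" by (intro allI impI) (simp only: w_def sh_mult sh_prod fA fB)
  ultimately show ?thesis using s0 i0(1) by blast
qed

end



lemma arith1: "(l'::nat) < m \<Longrightarrow> N \<le> N * m + r - N * l'"
proof -
  assume "l' < m"
  hence "N * (l' + 1) \<le> N * m" by (intro mult_le_mono2) simp
  hence "N * l' + N \<le> N * m" by (simp add: algebra_simps)
  thus ?thesis by linarith
qed

lemma arith2: "(m::nat) < l' \<Longrightarrow> N * l' \<le> N * m + r \<Longrightarrow> r < N \<Longrightarrow> False"
proof -
  assume "m < l'" "N * l' \<le> N * m + r" "r < N"
  moreover have "N * (m + 1) \<le> N * l'" using \<open>m < l'\<close> by (intro mult_le_mono2) simp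
  ultimately show False by (simp add: algebra_simps)
qed

context
  fixes \<gamma> :: "'a::{finite,field}"
  assumes g0: "\<gamma> \<noteq> 0" and gen: "\<forall>y::'a. y \<noteq> 0 \<longrightarrow> (\<exists>n::nat. y = \<gamma> ^ n)"
begin

lemma coeff_fixed_mult:
  assumes fw: "sh \<gamma> 1 w = w" and dg: "\<forall>k. card (UNIV::'a set) - 1 \<le> k \<longrightarrow> coeff g k = 0"
    and r: "r < card (UNIV::'a set) - 1"
  shows "coeff (w * g) ((card (UNIV::'a set) - 1) * m + r) = coeff w ((card (UNIV::'a set) - 1) * m) * coeff g r"
proof -
  let ?N = "card (UNIV::'a set) - 1"
  let ?h = "\<lambda>l. coeff w l * coeff g (?N * m + r - l)"
  have mem: "?N * m \<in> {..?N * m + r}" by simp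
  have z: "\<forall>l\<in>{..?N * m + r} - {?N * m}. ?h l = 0"
  proof
    fix l assume l: "l \<in> {..?N * m + r} - {?N * m}"
    show "?h l = 0"
    proof (cases "coeff w l = 0")
      case False
      then obtain l' where l': "l = ?N * l'" using fixed_coeff[OF g0 gen fw] by blast
      have "l' \<noteq> m" using l l' by auto
      hence "l' < m \<or> m < l'" by auto
      thus ?thesis
      proof
        assume "l' < m"
        hence "?N \<le> ?N * m + r - l" unfolding l' by (rule arith1)
        thus ?thesis using dg by simp
      next
        assume "m < l'"
        moreover have "?N * l' \<le> ?N * m + r" using l l' by simp
        ultimately have False using r by (rule arith2)
        thus ?thesis ..
      qed
    qed simp
  qed
  have "coeff (w * g) (?N * m + r) = (\<Sum>l\<le>?N * m + r. ?h l)" by (simp add: coeff_mult)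
  also have "\<dots> = ?h (?N * m) + (\<Sum>l\<in>{..?N * m + r} - {?N * m}. ?h l)"
    by (rule sum.remove) (use mem in auto)
  also have "(\<Sum>l\<in>{..?N * m + r} - {?N * m}. ?h l) = 0" using z by (rule sum.neutral)
  finally show ?thesis by simp
qed

lemma sh_fixed_all: assumes "sh \<gamma> 1 w = w" shows "sh \<gamma> j w = w"
proof (induction j)
  case (Suc j)
  have "sh \<gamma> (Suc j) w = sh \<gamma> 1 (sh \<gamma> j w)" by (simp add: sh_sh)
  thus ?case using Suc assms by simp
qed simp

end

theorem propositionE7:
  fixes \<gamma> :: "'a::{finite,field}" and s d :: nat and f :: "nat \<Rightarrow> 'a poly"
  assumes gen: "\<gamma> \<noteq> 0" "\<forall>y::'a. y \<noteq> 0 \<longrightarrow> (\<exists>n::nat. y = \<gamma> ^ n)"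
    and deg: "\<forall>i<s. degree (f i) \<le> d"
  shows "(det (Mmat \<gamma> s f) \<noteq> 0 \<longleftrightarrow> lin_indep_over subfield_xq1 s (\<lambda>i. to_fract (f i)))
       \<and> (card (UNIV :: 'a set) - 1 > d \<longrightarrow> (det (Mmat \<gamma> s f) \<noteq> 0 \<longleftrightarrow> lin_indep_Fq s f))"
proof -
  let ?N = "card (UNIV::'a set) - 1"
  let ?P = "mat s s (\<lambda>(j,i). sh \<gamma> j (f i))"
  have MP: "Mmat \<gamma> s f = map_mat to_fract ?P"
    by (rule eq_matI) (auto simp: Mmat_def sh_def)
  interpret tf: inj_comm_ring_hom "to_fract :: 'a poly \<Rightarrow> 'a poly fract" by unfold_locales auto
  have detM: "det (Mmat \<gamma> s f) = to_fract (det ?P)" unfolding MP by (rule tf.hom_det)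
  have Pc: "?P \<in> carrier_mat s s" by simp
  have part1: "det (Mmat \<gamma> s f) \<noteq> 0 \<longleftrightarrow> lin_indep_over subfield_xq1 s (\<lambda>i. to_fract (f i))"
  proof
    assume "det (Mmat \<gamma> s f) \<noteq> 0"
    hence dP: "det ?P \<noteq> 0" using detM by simp
    show "lin_indep_over subfield_xq1 s (\<lambda>i. to_fract (f i))"
    proof (rule ccontr)
      assume "\<not> lin_indep_over subfield_xq1 s (\<lambda>i. to_fract (f i))"
      from clear_dep[OF gen(1) gen(2) this] obtain w where
        w: "\<forall>i<s. sh \<gamma> 1 (w i) = w i" "\<exists>i<s. w i \<noteq> 0" "(\<Sum>i<s. w i * f i) = 0" by blast
      from w(2) obtain i0 where i0: "i0 < s" "w i0 \<noteq> 0" by blast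
      let ?v = "vec s w"
      have Pv: "?P *\<^sub>v ?v = 0\<^sub>v s"
      proof (rule eq_vecI)
        fix j assume "j < dim_vec (0\<^sub>v s :: 'a poly vec)"
        hence j: "j < s" by simp
        have "(?P *\<^sub>v ?v) $ j = (\<Sum>i = 0..<s. sh \<gamma> j (f i) * w i)"
          using j by (simp add: scalar_prod_def)
        also have "\<dots> = (\<Sum>i<s. sh \<gamma> j (w i * f i))"
          using w(1) sh_fixed_all[OF gen(1) gen(2)]
          by (intro sum.cong) (auto simp: atLeast0LessThan mult.commute)
        also have "\<dots> = sh \<gamma> j (\<Sum>i<s. w i * f i)" by (simp add: sh_sum)
        also have "\<dots> = 0" using w(3) by simp
        finally show "(?P *\<^sub>v ?v) $ j = 0\<^sub>v s $ j" using j by simp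
      qed simp
      have "?v \<noteq> 0\<^sub>v s"
      proof
        assume "?v = 0\<^sub>v s"
        hence "?v $ i0 = 0\<^sub>v s $ i0" by simp
        thus False using i0 by simp
      qed
      hence "det ?P = 0" using det_0_iff_vec_prod_zero[OF Pc] Pv by (metis vec_carrier)
      thus False using dP by simp
    qed
  next
    assume ind: "lin_indep_over subfield_xq1 s (\<lambda>i. to_fract (f i))"
    show "det (Mmat \<gamma> s f) \<noteq> 0"
    proof
      assume "det (Mmat \<gamma> s f) = 0"
      hence "det ?P = 0" using detM by simp
      from dep_from_det0[OF gen(1) gen(2) this] ind show False by simp
    qed
  qed
  have part2: "?N > d \<longrightarrow> (lin_indep_over subfield_xq1 s (\<lambda>i. to_fract (f i)) \<longleftrightarrow> lin_indep_Fq s f)"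
  proof
    assume dN: "?N > d"
    show "lin_indep_over subfield_xq1 s (\<lambda>i. to_fract (f i)) \<longleftrightarrow> lin_indep_Fq s f"
    proof
      assume ind: "lin_indep_over subfield_xq1 s (\<lambda>i. to_fract (f i))"
      show "lin_indep_Fq s f" unfolding lin_indep_Fq_def
      proof (rule allI, rule impI)
        fix c :: "nat \<Rightarrow> 'a"
        assume sc: "(\<Sum>i<s. smult (c i) (f i)) = 0"
        define C where "C i = to_fract [:c i:]" for i
        have CK: "\<forall>i<s. C i \<in> subfield_xq1"
        proof (intro allI impI)
          fix i
          have "C i = to_fract ([:c i:] \<circ>\<^sub>p monom 1 ?N) / to_fract (1 \<circ>\<^sub>p monom 1 ?N)"
            by (simp add: C_def pcompose_1)
          thus "C i \<in> subfield_xq1" unfolding subfield_xq1_def by blast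
        qed
        have "(\<Sum>i<s. C i * to_fract (f i)) = to_fract (\<Sum>i<s. smult (c i) (f i))"
          by (simp add: C_def to_fract_sum flip: to_fract_mult)
        also have "\<dots> = 0" using sc by simp
        finally have "\<forall>i<s. C i = 0" using ind CK unfolding lin_indep_over_def by blast
        thus "\<forall>i<s. c i = 0" by (simp add: C_def)
      qed
    next
      assume indF: "lin_indep_Fq s f"
      show "lin_indep_over subfield_xq1 s (\<lambda>i. to_fract (f i))"
      proof (rule ccontr)
        assume "\<not> lin_indep_over subfield_xq1 s (\<lambda>i. to_fract (f i))"
        from clear_dep[OF gen(1) gen(2) this] obtain w where
          w: "\<forall>i<s. sh \<gamma> 1 (w i) = w i" "\<exists>i<s. w i \<noteq> 0" "(\<Sum>i<s. w i * f i) = 0" by blast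
        from w(2) obtain i0 where i0: "i0 < s" "w i0 \<noteq> 0" by blast
        have "coeff (w i0) (degree (w i0)) \<noteq> 0" using i0 by simp
        then obtain m0 where m0: "degree (w i0) = ?N * m0"
          using fixed_coeff[OF gen(1) gen(2), of "w i0" "degree (w i0)"] w(1) i0 by blast
        define cc where "cc i = coeff (w i) (?N * m0)" for i
        have dgf: "\<forall>k. ?N \<le> k \<longrightarrow> coeff (f i) k = 0" if "i < s" for i
        proof (intro allI impI)
          fix k assume "?N \<le> k"
          hence "degree (f i) < k" using deg that dN by (meson le_less_trans less_le_trans)
          thus "coeff (f i) k = 0" by (rule coeff_eq_0)
        qed
        have "(\<Sum>i<s. smult (cc i) (f i)) = 0"
        proof (rule poly_eqI)
          fix r
          show "coeff (\<Sum>i<s. smult (cc i) (f i)) r = coeff 0 r"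
          proof (cases "r < ?N")
            case True
            have "coeff (\<Sum>i<s. smult (cc i) (f i)) r = (\<Sum>i<s. coeff (w i * f i) (?N * m0 + r))"
              unfolding coeff_sum
            proof (intro sum.cong refl)
              fix i assume "i \<in> {..<s}"
              hence i: "i < s" by simp
              show "coeff (smult (cc i) (f i)) r = coeff (w i * f i) (?N * m0 + r)"
                using coeff_fixed_mult[OF gen(1) gen(2) _ dgf[OF i] True, of "w i" m0] w(1) i
                by (simp add: cc_def)
            qed
            also have "\<dots> = coeff (\<Sum>i<s. w i * f i) (?N * m0 + r)" by (simp add: coeff_sum)
            finally show ?thesis using w(3) by simp
          next
            case False
            thus ?thesis using dgf by (simp add: coeff_sum)
          qed
        qed
        hence "\<forall>i<s. cc i = 0" using indF unfolding lin_indep_Fq_def by blast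
        hence "cc i0 = 0" using i0 by blast
        hence "coeff (w i0) (degree (w i0)) = 0" using m0 by (simp add: cc_def)
        thus False using i0 by simp
      qed
    qed
  qed
  show ?thesis using part1 part2 by blast
qed



end
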